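(* Let $L$ be an $R_0$-algebra. Given any chain of fated filters $F_0\subset F_1\subset\cdots\subset F_n=L$ of $L$, there exists an $(\in,\in\vee q)$-fuzzy fated filter $\mu$ of $L$ whose level fated filters $U(\mu;t)=\{x\in L\mid\mu(x)\ge t\}$, $t\in(0,0.5]$, are precisely the members $F_0,F_1,\dots,F_n$ of the chain, and such that $U(\mu;0.5)=F_0$.
   Context: An $R_0$-algebra is a bounded distributive lattice $(L,\wedge,\vee,0,1)$ with an order-reversing involution $\neg$ and a binary operation $\to$ such that for all $x,y,z\in L$: $x\to y=\neg y\to\neg x$; $1\to x=x$; $(y\to z)\wedge((x\to y)\to(x\to z))=y\to z$; $x\to(y\to z)=y\to(x\to z)$; $x\to(y\vee z)=(x\to y)\vee(x\to z)$; $(x\to y)\vee((x\to y)\to(\neg x\vee y))=1$. A fated filter of $L$ is a nonempty subset $A\subseteq L$ with $1\in A$ such that for all $x,y\in L$ and $a\in A$, $a\to((x\to y)\to x)\in A$ implies $x\in A$. For $x\in L$, $t\in(0,1]$ and a fuzzy subset $\mu:L\to[0,1]$: $x_t\in\mu$ iff $\mu(x)\ge t$; $x_t\,q\,\mu$ iff $\mu(x)+t>1$; $x_t\in\vee q\,\mu$ iff $x_t\in\mu$ or $x_t\,q\,\mu$. $\mu$ is an $(\in,\in\vee q)$-fuzzy fated filter of $L$ if (1) for all $x\in L$, $t\in(0,1]$: $x_t\in\mu\Rightarrow 1_t\in\vee q\,\mu$; and (2) for all $x,a,y\in L$, $t,s\in(0,1]$: if $(a\to((x\to y)\to x))_t\in\mu$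 and $a_s\in\mu$ then $x_{\min\{t,s\}}\in\vee q\,\mu$. *)

theory Defs
  imports Complex_Main
begin

definition r0_algebra ::
  "('a::{distrib_lattice,bounded_lattice} \<Rightarrow> 'a) \<Rightarrow> ('a \<Rightarrow> 'a \<Rightarrow> 'a) \<Rightarrow> bool" where
  "r0_algebra neg imp \<longleftrightarrow>
     (\<forall>x. neg (neg x) = x) \<and>
     (\<forall>x y. x \<le> y \<longrightarrow> neg y \<le> neg x) \<and>
     (\<forall>x y. imp x y = imp (neg y) (neg x)) \<and>
     (\<forall>x. imp top x = x) \<and>
     (\<forall>x y z. inf (imp y z) (imp (imp x y) (imp x z)) = imp y z) \<and>
     (\<forall>x y z. imp x (imp y z) = imp y (imp x z)) \<and>
     (\<forall>x y z. imp x (sup y z) = sup (imp x y) (imp x z)) \<and>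
     (\<forall>x y. sup (imp x y) (imp (imp x y) (sup (neg x) y)) = top)"

definition fated_filter ::
  "('a::{distrib_lattice,bounded_lattice} \<Rightarrow> 'a \<Rightarrow> 'a) \<Rightarrow> 'a set \<Rightarrow> bool" where
  "fated_filter imp A \<longleftrightarrow>
     A \<noteq> {} \<and> top \<in> A \<and>
     (\<forall>x y a. a \<in> A \<longrightarrow> imp a (imp (imp x y) x) \<in> A \<longrightarrow> x \<in> A)"

definition fin :: "'a \<Rightarrow> real \<Rightarrow> ('a \<Rightarrow> real) \<Rightarrow> bool" where
  "fin x t \<mu> \<longleftrightarrow> \<mu> x \<ge> t"

definition fq :: "'a \<Rightarrow> real \<Rightarrow> ('a \<Rightarrow> real) \<Rightarrow> bool" where
  "fq x t \<mu> \<longleftrightarrow> \<mu> x + t > 1"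

definition fin_or_q :: "'a \<Rightarrow> real \<Rightarrow> ('a \<Rightarrow> real) \<Rightarrow> bool" where
  "fin_or_q x t \<mu> \<longleftrightarrow> fin x t \<mu> \<or> fq x t \<mu>"

definition fuzzy_subset :: "('a \<Rightarrow> real) \<Rightarrow> bool" where
  "fuzzy_subset \<mu> \<longleftrightarrow> (\<forall>x. 0 \<le> \<mu> x \<and> \<mu> x \<le> 1)"

definition in_inq_fuzzy_fated_filter ::
  "('a::{distrib_lattice,bounded_lattice} \<Rightarrow> 'a \<Rightarrow> 'a) \<Rightarrow> ('a \<Rightarrow> real) \<Rightarrow> bool" where
  "in_inq_fuzzy_fated_filter imp \<mu> \<longleftrightarrow>
     fuzzy_subset \<mu> \<and>
     (\<forall>x t. 0 < t \<and> t \<le> 1 \<longrightarrow> fin x t \<mu> \<longrightarrow> fin_or_q top t \<mu>) \<and>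
     (\<forall>x a y t s. 0 < t \<and> t \<le> 1 \<and> 0 < s \<and> s \<le> 1 \<longrightarrow>
        fin (imp a (imp (imp x y) x)) t \<mu> \<longrightarrow> fin a s \<mu> \<longrightarrow>
        fin_or_q x (min t s) \<mu>)"

definition level_set :: "('a \<Rightarrow> real) \<Rightarrow> real \<Rightarrow> 'a set" where
  "level_set \<mu> t = {x. \<mu> x \<ge> t}"

end

theory Submission
  imports Defs
begin

lemma chain_mono:
  assumes "\<forall>i<n. F i \<subset> F (Suc i)"
  shows "i \<le> j \<Longrightarrow> j \<le> n \<Longrightarrow> F i \<subseteq> F j"
proof (induction j)
  case 0 then show ?case by simp
next
  case (Suc j)
  show ?case
  proof (cases "i = Suc j")
    case True then show ?thesis by simp
  next
    case False
    hence "i \<le> j" using Suc.prems by simp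
    hence "F i \<subseteq> F j" using Suc.IH Suc.prems by simp
    moreover have "F j \<subseteq> F (Suc j)" using assms Suc.prems by (simp add: Suc_le_eq psubset_imp_subset)
    ultimately show ?thesis by blast
  qed
qed

theorem corollary3p27:
  fixes neg :: "'a::{distrib_lattice,bounded_lattice} \<Rightarrow> 'a"
    and imp :: "'a \<Rightarrow> 'a \<Rightarrow> 'a"
    and F :: "nat \<Rightarrow> 'a set"
    and n :: nat
  assumes "r0_algebra neg imp"
    and "\<forall>i\<le>n. fated_filter imp (F i)"
    and "\<forall>i<n. F i \<subset> F (Suc i)"
    and "F n = UNIV"
  shows "\<exists>\<mu>. in_inq_fuzzy_fated_filter imp \<mu> \<and>
           {level_set \<mu> t | t. 0 < t \<and> t \<le> 1/2} = {F i | i. i \<le> n} \<and>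
           level_set \<mu> (1/2) = F 0"
proof -
  define lv where "lv x = (LEAST k. x \<in> F k)" for x
  have inF: "x \<in> F (lv x)" for x
    unfolding lv_def by (rule LeastI[of _ n]) (use assms(4) in auto)
  have lvn: "lv x \<le> n" for x
    unfolding lv_def by (rule Least_le) (use assms(4) in auto)
  have mono: "i \<le> j \<Longrightarrow> j \<le> n \<Longrightarrow> F i \<subseteq> F j" for i j
    using chain_mono[OF assms(3)] by blast
  have memF: "j \<le> n \<Longrightarrow> x \<in> F j \<longleftrightarrow> lv x \<le> j" for x j
  proof
    assume "x \<in> F j" then show "lv x \<le> j" unfolding lv_def by (rule Least_le)
  next
    assume "j \<le> n" "lv x \<le> j" then show "x \<in> F j" using mono inF by blast
  qed
  define f :: "nat \<Rightarrow> real" where "f k = 1 / (2 * (real k + 1))" for k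
  have fmono: "f k \<ge> f j \<longleftrightarrow> k \<le> j" for k j
    unfolding f_def by (simp add: divide_simps)
  have fpos: "0 < f k" "f k \<le> 1/2" for k unfolding f_def by (auto simp: divide_simps)
  define \<mu> where "\<mu> x = f (lv x)" for x
  have top0: "top \<in> F 0" using assms(2) unfolding fated_filter_def by auto
  have lvtop: "lv top = 0" using memF[of 0 top] top0 by simp
  have ff: "in_inq_fuzzy_fated_filter imp \<mu>"
    unfolding in_inq_fuzzy_fated_filter_def
  proof (intro conjI allI impI)
    show "fuzzy_subset \<mu>" unfolding fuzzy_subset_def \<mu>_def
    proof
      fix x show "0 \<le> f (lv x) \<and> f (lv x) \<le> 1" using fpos(1)[of "lv x"] fpos(2)[of "lv x"] by linarith
    qed
  next
    fix x :: 'a and t :: real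
    assume "0 < t \<and> t \<le> 1" "fin x t \<mu>"
    show "fin_or_q top t \<mu>" unfolding fin_or_q_def fin_def fq_def \<mu>_def lvtop f_def
      by auto
  next
    fix x a y :: 'a and t s :: real
    assume h: "0 < t \<and> t \<le> 1 \<and> 0 < s \<and> s \<le> 1"
      "fin (imp a (imp (imp x y) x)) t \<mu>" "fin a s \<mu>"
    define b where "b = imp a (imp (imp x y) x)"
    define k where "k = max (lv b) (lv a)"
    have kn: "k \<le> n" using lvn k_def by simp
    have "b \<in> F k" "a \<in> F k" using memF[OF kn] k_def by auto
    hence "x \<in> F k" using assms(2) kn unfolding fated_filter_def b_def by blast
    hence "lv x \<le> k" using memF[OF kn] by simp
    hence "\<mu> x \<ge> f k" unfolding \<mu>_def using fmono[where k="lv x" and j=k] by blast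
    moreover have "f k = min (\<mu> b) (\<mu> a)"
    proof (cases "lv b \<le> lv a")
      case True
      hence "f (lv a) \<le> f (lv b)" using fmono by blast
      then show ?thesis using True by (simp add: max_def min_def \<mu>_def k_def)
    next
      case False
      hence "f (lv b) \<le> f (lv a)" using fmono[where k="lv a" and j="lv b"] by simp
      then show ?thesis using False by (simp add: max_def min_def \<mu>_def k_def)
    qed
    ultimately show "fin_or_q x (min t s) \<mu>" using h unfolding fin_or_q_def fin_def b_def
      by linarith
  qed
  have lvlF: "i \<le> n \<Longrightarrow> level_set \<mu> (f i) = F i" for i
  proof -
    assume i: "i \<le> n"
    have "f (lv x) \<ge> f i \<longleftrightarrow> x \<in> F i" for x using fmono[where k="lv x" and j=i] memF[OF i, of x] by blast
    thus ?thesis unfolding level_set_def \<mu>_def by blast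
  qed
  have "{level_set \<mu> t | t. 0 < t \<and> t \<le> 1/2} = {F i | i. i \<le> n}"
  proof (intro equalityI subsetI)
    fix A assume "A \<in> {level_set \<mu> t | t. 0 < t \<and> t \<le> 1/2}"
    then obtain t where t: "0 < t" "t \<le> 1/2" "A = level_set \<mu> t" by auto
    define j where "j = (LEAST j. j = n \<or> f (Suc j) < t)"
    have P: "j = n \<or> f (Suc j) < t" unfolding j_def by (rule LeastI[of _ n]) simp
    have jn: "j \<le> n" unfolding j_def by (rule Least_le) simp
    have fj: "t \<le> f j"
    proof (cases j)
      case 0 then show ?thesis using t by (simp add: f_def)
    next
      case (Suc j')
      have "\<not> (j' = n \<or> f (Suc j') < t)"
        using not_less_Least[of j' "\<lambda>j. j = n \<or> f (Suc j) < t"] Suc j_def by simp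
      then show ?thesis using Suc by simp
    qed
    have "A = F j"
    proof -
      have "\<mu> x \<ge> t \<longleftrightarrow> lv x \<le> j" for x
      proof
        assume a: "\<mu> x \<ge> t"
        show "lv x \<le> j"
        proof (rule ccontr)
          assume "\<not> lv x \<le> j"
          hence "Suc j \<le> lv x" "j \<noteq> n" using lvn[of x] by auto
          hence "f (lv x) \<le> f (Suc j)" "f (Suc j) < t" using fmono[where k="Suc j" and j="lv x"] P by auto
          thus False using a unfolding \<mu>_def by simp
        qed
      next
        assume "lv x \<le> j" thus "\<mu> x \<ge> t" unfolding \<mu>_def using fmono[where k="lv x" and j=j] fj by linarith
      qed
      thus ?thesis using t memF[OF jn] unfolding level_set_def by auto
    qed
    thus "A \<in> {F i | i. i \<le> n}" using jn by auto
  next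
    fix A assume "A \<in> {F i | i. i \<le> n}"
    then obtain i where "i \<le> n" "A = F i" by auto
    thus "A \<in> {level_set \<mu> t | t. 0 < t \<and> t \<le> 1/2}"
      using lvlF fpos by (metis (mono_tags, lifting) mem_Collect_eq)
  qed
  moreover have "level_set \<mu> (1/2) = F 0" using lvlF[of 0] by (simp add: f_def)
  ultimately show ?thesis using ff by blast
qed

end
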